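(* Let $X$ be an $n\times n$ Boolean matrix and define $P_0=X$ and $P_k=P_{k-1}+P_{k-1}^2+P_{k-1}^3$ for $k\ge1$. Then $X^*=I_n+P_{\lceil\log_2 n\rceil}$.
   Context: Boolean matrices have entries in $\{0,1\}$. $+$ is the entrywise OR and the product is the Boolean product. $I_n$ is the $n\times n$ identity matrix. The Kleene closure is $X^*=\sum_{k\ge0}X^k$ with $X^0=I_n$; equivalently, $X^*[x,y]=1$ iff $x=y$ or there is a directed path from $x$ to $y$ in the digraph with adjacency matrix $X$. *)

theory Defs
  imports Complex_Main
begin

text \<open>Boolean n x n matrices, indexed by a finite type 'n (so n = CARD('n) >= 1).\<close>
type_synonym 'n bmat = "'n \<Rightarrow> 'n \<Rightarrow> bool"

definition bplus :: "'n bmat \<Rightarrow> 'n bmat \<Rightarrow> 'n bmat" where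
  "bplus A B = (\<lambda>i j. A i j \<or> B i j)"

definition bmult :: "'n bmat \<Rightarrow> 'n bmat \<Rightarrow> 'n bmat" where
  "bmult A B = (\<lambda>i j. \<exists>k. A i k \<and> B k j)"

definition bid :: "'n bmat" where
  "bid = (\<lambda>i j. i = j)"

fun bpow :: "'n bmat \<Rightarrow> nat \<Rightarrow> 'n bmat" where
  "bpow A 0 = bid"
| "bpow A (Suc k) = bmult (bpow A k) A"

definition kleene :: "'n bmat \<Rightarrow> 'n bmat" where
  "kleene A = (\<lambda>i j. \<exists>k. bpow A k i j)"

fun Pseq :: "'n bmat \<Rightarrow> nat \<Rightarrow> 'n bmat" where
  "Pseq X 0 = X"
| "Pseq X (Suc k) = bplus (bplus (Pseq X k) (bpow (Pseq X k) 2)) (bpow (Pseq X k) 3)"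

end

theory Submission
  imports Defs
begin

lemma bmult_assoc: "bmult (bmult A B) C = bmult A (bmult B C)"
  unfolding bmult_def by (auto intro!: ext)

lemma bmult_bid_l[simp]: "bmult bid A = A" unfolding bmult_def bid_def by (auto intro!: ext)
lemma bmult_bid_r[simp]: "bmult A bid = A" unfolding bmult_def bid_def by (auto intro!: ext)

lemma bpow_add: "bpow A (a + b) = bmult (bpow A a) (bpow A b)"
  by (induction b) (auto simp: bmult_assoc)

lemma bpow_addD: "bpow A (a + b) i j \<Longrightarrow> \<exists>l. bpow A a i l \<and> bpow A b l j"
  by (simp add: bpow_add bmult_def)

lemma bpow_addI: "bpow A a i l \<Longrightarrow> bpow A b l j \<Longrightarrow> bpow A (a + b) i j"
  by (auto simp: bpow_add bmult_def)

lemma bpow2: "bpow P 2 i j \<longleftrightarrow> (\<exists>l. P i l \<and> P l j)"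
  by (simp add: numeral_2_eq_2 bmult_def bid_def)

lemma bpow3: "bpow P 3 i j \<longleftrightarrow> (\<exists>l l'. P i l \<and> P l l' \<and> P l' j)"
  by (simp add: numeral_3_eq_3 bmult_def bid_def) blast

lemma bpow1: "bpow P 1 = P"
  by simp

lemma Pseq_char: "Pseq X k i j \<longleftrightarrow> (\<exists>m. 1 \<le> m \<and> m \<le> 3^k \<and> bpow X m i j)"
proof (induction k arbitrary: i j)
  case 0
  show ?case by (auto simp: bmult_def bid_def le_Suc_eq)
next
  case (Suc k)
  define N :: nat where "N = 3^k"
  have N: "N \<ge> 1" unfolding N_def by simp
  have IH: "\<And>i j. Pseq X k i j \<longleftrightarrow> (\<exists>m. 1 \<le> m \<and> m \<le> N \<and> bpow X m i j)"
    using Suc N_def by simp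
  have e: "(3::nat)^(Suc k) = 3 * N" unfolding N_def by simp
  show ?case
  proof
    assume "Pseq X (Suc k) i j"
    then consider "Pseq X k i j" | "bpow (Pseq X k) 2 i j" | "bpow (Pseq X k) 3 i j"
      by (auto simp: bplus_def)
    then show "\<exists>m\<ge>1. m \<le> 3 ^ Suc k \<and> bpow X m i j"
    proof cases
      case 1 then show ?thesis unfolding e IH by force
    next
      case 2
      then obtain l a b where "1 \<le> a" "a \<le> N" "bpow X a i l" "1 \<le> b" "b \<le> N" "bpow X b l j"
        unfolding bpow2 IH by blast
      then show ?thesis unfolding e by (intro exI[of _ "a+b"]) (auto intro: bpow_addI)
    next
      case 3
      then obtain l l' a b c where "1 \<le> a" "a \<le> N" "bpow X a i l" "1 \<le> b" "b \<le> N" "bpow X b l l'"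
         "1 \<le> c" "c \<le> N" "bpow X c l' j"
        unfolding bpow3 IH by blast
      then show ?thesis unfolding e by (intro exI[of _ "a+b+c"]) (auto intro: bpow_addI)
    qed
  next
    assume "\<exists>m\<ge>1. m \<le> 3 ^ Suc k \<and> bpow X m i j"
    then obtain m where m: "1 \<le> m" "m \<le> 3 * N" "bpow X m i j" unfolding e by blast
    consider "m \<le> N" | "N < m" "m \<le> 2 * N" | "2 * N < m" by linarith
    then show "Pseq X (Suc k) i j"
    proof cases
      case 1 then have "Pseq X k i j" using IH m by blast
      then show ?thesis by (simp add: bplus_def)
    next
      case 2
      then have "m = N + (m - N)" by simp
      with m(3) obtain l where "bpow X N i l" "bpow X (m - N) l j" using bpow_addD by metis
      moreover have "1 \<le> m - N" "m - N \<le> N" using 2 by auto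
      ultimately have "Pseq X k i l" "Pseq X k l j" using N unfolding IH
        by (meson order_refl)+
      then have "bpow (Pseq X k) 2 i j" unfolding bpow2 by blast
      then show ?thesis by (simp add: bplus_def)
    next
      case 3
      then have "m = N + N + (m - 2 * N)" by simp
      with m(3) obtain l l' where "bpow X N i l" "bpow X N l l'" "bpow X (m - 2*N) l' j"
        using bpow_addD by metis
      moreover have "1 \<le> m - 2*N" "m - 2*N \<le> N" using 3 m by auto
      ultimately have "Pseq X k i l" "Pseq X k l l'" "Pseq X k l' j" using N unfolding IH
        by (meson order_refl)+
      then have "bpow (Pseq X k) 3 i j" unfolding bpow3 by blast
      then show ?thesis by (simp add: bplus_def)
    qed
  qed
qed

lemma bpow_walk: "bpow X m i j \<longleftrightarrow> (\<exists>f. f 0 = i \<and> f m = j \<and> (\<forall>t<m. X (f t) (f (Suc t))))"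
proof (induction m arbitrary: j)
  case 0
  then show ?case by (auto simp: bid_def)
next
  case (Suc m)
  show ?case
  proof
    assume "bpow X (Suc m) i j"
    then obtain k where "bpow X m i k" "X k j" by (auto simp: bmult_def)
    then obtain f where f: "f 0 = i" "f m = k" "\<forall>t<m. X (f t) (f (Suc t))" using Suc by blast
    let ?g = "f(Suc m := j)"
    have "?g 0 = i" "?g (Suc m) = j" using f by auto
    moreover have "\<forall>t<Suc m. X (?g t) (?g (Suc t))"
      using f \<open>X k j\<close> by (auto simp: less_Suc_eq)
    ultimately show "\<exists>f. f 0 = i \<and> f (Suc m) = j \<and> (\<forall>t<Suc m. X (f t) (f (Suc t)))" by blast
  next
    assume "\<exists>f. f 0 = i \<and> f (Suc m) = j \<and> (\<forall>t<Suc m. X (f t) (f (Suc t)))"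
    then obtain f where f: "f 0 = i" "f (Suc m) = j" "\<forall>t<Suc m. X (f t) (f (Suc t))" by blast
    then have "bpow X m i (f m)" using Suc by auto
    then show "bpow X (Suc m) i j" using f by (auto simp: bmult_def)
  qed
qed

lemma shorten:
  fixes X :: "('n::finite) bmat"
  assumes "bpow X m i j" "m > card (UNIV :: 'n set)"
  shows "\<exists>m'<m. bpow X m' i j"
proof -
  obtain f where f: "f 0 = i" "f m = j" "\<forall>t<m. X (f t) (f (Suc t))"
    using assms(1) bpow_walk by metis
  have "card (f ` {0..m}) \<le> card (UNIV :: 'n set)" by (rule card_mono) auto
  then have "\<not> inj_on f {0..m}" using assms(2) card_image by fastforce
  then obtain a b where ab: "a < b" "b \<le> m" "f a = f b"
    unfolding inj_on_def by (metis atLeastAtMost_iff linorder_neqE_nat)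
  define g where "g t = (if t \<le> a then f t else f (t + (b - a)))" for t
  have "g 0 = i" using f by (simp add: g_def)
  moreover have "g (m - (b - a)) = j"
  proof (cases "m - (b - a) \<le> a")
    case True
    then have "b = m" using ab by linarith
    have e: "m - (b - a) = a" using ab \<open>b = m\<close> by simp
    have "g a = f a" by (simp add: g_def)
    then show ?thesis unfolding e using ab f \<open>b = m\<close> by simp
  next
    case False
    have eq: "m - (b - a) + (b - a) = m" using ab by simp
    have "g (m - (b - a)) = f (m - (b - a) + (b - a))" unfolding g_def using False by (rule if_not_P)
    also have "\<dots> = f m" using eq by (rule arg_cong)
    finally show ?thesis using f(2) by simp
  qed
  moreover have "\<forall>t<m - (b - a). X (g t) (g (Suc t))"
  proof (intro allI impI)
    fix t assume t: "t < m - (b - a)"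
    consider "t < a" | "t = a" | "t > a" by linarith
    then show "X (g t) (g (Suc t))"
    proof cases
      case 1 then show ?thesis using f t ab by (auto simp: g_def)
    next
      case 2
      then have "g t = f b" "g (Suc t) = f (Suc b)" using ab by (auto simp: g_def)
      moreover have "b < m" using t ab 2 by linarith
      ultimately show ?thesis using f by auto
    next
      case 3 then show ?thesis using f t ab by (auto simp: g_def)
    qed
  qed
  ultimately have "\<exists>f. f 0 = i \<and> f (m - (b - a)) = j \<and> (\<forall>t<m - (b - a). X (f t) (f (Suc t)))"
    by (intro exI[of _ g]) simp
  then have "bpow X (m - (b - a)) i j" by (rule bpow_walk[THEN iffD2])
  moreover have "m - (b - a) < m" using ab by linarith
  ultimately show ?thesis by blast
qed

lemma bounded:
  fixes X :: "('n::finite) bmat"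
  shows "bpow X m i j \<Longrightarrow> i = j \<or> (\<exists>m'. 1 \<le> m' \<and> m' \<le> card (UNIV :: 'n set) \<and> bpow X m' i j)"
proof (induction m rule: less_induct)
  case (less m)
  show ?case
  proof (cases "m \<le> card (UNIV :: 'n set)")
    case True
    show ?thesis
    proof (cases m)
      case 0 then show ?thesis using less.prems by (simp add: bid_def)
    next
      case (Suc k) then show ?thesis using True less.prems by (intro disjI2 exI[of _ m]) auto
    qed
  next
    case False
    then obtain m' where "m' < m" "bpow X m' i j" using shorten less.prems by (metis not_le)
    then show ?thesis using less.IH by blast
  qed
qed

lemma log_bound: "card (UNIV :: ('n::finite) set) \<le> 3 ^ nat \<lceil>log 2 (real (card (UNIV :: 'n set)))\<rceil>"
proof -
  let ?n = "card (UNIV :: 'n set)"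
  let ?k = "nat \<lceil>log 2 (real ?n)\<rceil>"
  have n: "real ?n > 0" using finite_UNIV_card_ge_0[where 'a='n] by simp
  have "real ?n = 2 powr (log 2 (real ?n))" using n by simp
  also have "\<dots> \<le> 2 powr (real ?k)"
    by (intro powr_mono) (auto, linarith)
  also have "\<dots> = 2 ^ ?k" by (simp add: powr_realpow)
  finally have "?n \<le> (2::nat) ^ ?k" by (metis of_nat_le_iff of_nat_numeral of_nat_power)
  also have "\<dots> \<le> 3 ^ ?k" by (intro power_mono) auto
  finally show ?thesis .
qed

theorem mainTheorem11:
  fixes X :: "('n::finite) bmat"
  shows "kleene X = bplus bid (Pseq X (nat \<lceil>log 2 (real (card (UNIV :: 'n set)))\<rceil>))"
proof (intro ext iffI)
  fix i j
  let ?k = "nat \<lceil>log 2 (real (card (UNIV :: 'n set)))\<rceil>"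
  {
    assume "kleene X i j"
    then obtain m where "bpow X m i j" by (auto simp: kleene_def)
    from bounded[OF this] log_bound[where 'n='n]
    show "bplus bid (Pseq X ?k) i j"
      unfolding bplus_def Pseq_char bid_def by (meson order_trans)
  }
  {
    assume "bplus bid (Pseq X ?k) i j"
    then show "kleene X i j"
      unfolding bplus_def Pseq_char kleene_def bid_def
      by (metis bpow.simps(1) bid_def)
  }
qed

end
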